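(* Let $\mathcal{C}$ be a class of finite graphs for which there is a natural number $N$ such that every set of pairwise disjoint edges (edges $\{a_i,b_i\}$, $i=1,\dots,k$, with all $a_1,\dots,a_k,b_1,\dots,b_k$ distinct) in every member of $\mathcal{C}$ has size at most $N$. Then $\mathcal{C}$ is well quasi-ordered under both the standard and the strong homomorphic image orderings.
   Context: A graph is a set with a symmetric binary edge relation. A homomorphism maps edges to edges; it is strong if additionally every edge of the target among vertices of the image is the image of an edge. Standard homomorphic image ordering: $A\preceq B$ iff there is a surjective homomorphism $B\to A$; strong: iff there is a surjective strong homomorphism $B\to A$. Well quasi-ordered means no infinite strictly decreasing sequence and no infinite antichain; structures considered up to isomorphism. *)

theory Defs
  imports Main
begin

text \<open>A graph is a vertex set together with a symmetric binary edge relation on it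
  (loops are not excluded, following the paper's definition).\<close>
type_synonym 'a graph = "'a set \<times> ('a \<times> 'a) set"

definition verts :: "'a graph \<Rightarrow> 'a set" where "verts G = fst G"
definition edges :: "'a graph \<Rightarrow> ('a \<times> 'a) set" where "edges G = snd G"

definition is_graph :: "'a graph \<Rightarrow> bool" where
  "is_graph G \<longleftrightarrow> edges G \<subseteq> verts G \<times> verts G \<and> sym (edges G)"

definition finite_graph :: "'a graph \<Rightarrow> bool" where
  "finite_graph G \<longleftrightarrow> is_graph G \<and> finite (verts G)"

definition graph_hom :: "('a \<Rightarrow> 'a) \<Rightarrow> 'a graph \<Rightarrow> 'a graph \<Rightarrow> bool" where
  "graph_hom f G H \<longleftrightarrow> f ` verts G \<subseteq> verts H \<and>
     (\<forall>(x, y) \<in> edges G. (f x, f y) \<in> edges H)"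

definition strong_graph_hom :: "('a \<Rightarrow> 'a) \<Rightarrow> 'a graph \<Rightarrow> 'a graph \<Rightarrow> bool" where
  "strong_graph_hom f G H \<longleftrightarrow> graph_hom f G H \<and>
     (\<forall>(u, v) \<in> edges H. u \<in> f ` verts G \<and> v \<in> f ` verts G \<longrightarrow>
        (\<exists>x y. (x, y) \<in> edges G \<and> f x = u \<and> f y = v))"

definition hom_image_le :: "'a graph \<Rightarrow> 'a graph \<Rightarrow> bool" where
  "hom_image_le A B \<longleftrightarrow> (\<exists>f. graph_hom f B A \<and> f ` verts B = verts A)"

definition strong_hom_image_le :: "'a graph \<Rightarrow> 'a graph \<Rightarrow> bool" where
  "strong_hom_image_le A B \<longleftrightarrow> (\<exists>f. strong_graph_hom f B A \<and> f ` verts B = verts A)"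

definition wqo_on_class :: "('b \<Rightarrow> 'b \<Rightarrow> bool) \<Rightarrow> 'b set \<Rightarrow> bool" where
  "wqo_on_class le C \<longleftrightarrow>
     (\<nexists>g :: nat \<Rightarrow> 'b. (\<forall>i. g i \<in> C) \<and>
         (\<forall>i. le (g (Suc i)) (g i) \<and> \<not> le (g i) (g (Suc i)))) \<and>
     (\<nexists>g :: nat \<Rightarrow> 'b. (\<forall>i. g i \<in> C) \<and>
         (\<forall>i j. i \<noteq> j \<longrightarrow> \<not> le (g i) (g j)))"

definition disjoint_edge_set :: "'a graph \<Rightarrow> ('a \<times> 'a) set \<Rightarrow> bool" where
  "disjoint_edge_set G M \<longleftrightarrow> M \<subseteq> edges G \<and> (\<forall>(a, b) \<in> M. a \<noteq> b) \<and>
     (\<forall>p \<in> M. \<forall>q \<in> M. p \<noteq> q \<longrightarrow> {fst p, snd p} \<inter> {fst q, snd q} = {})"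

end

theory Submission
  imports Defs Complex_Main "HOL-Library.Infinite_Set"
begin

lemma dec_eventually_const:
  fixes a :: "nat \<Rightarrow> nat"
  assumes "decseq a" shows "\<exists>n. \<forall>m\<ge>n. a m = a n"
proof -
  have "(LEAST x. x \<in> range a) \<in> range a" by (rule LeastI) (rule rangeI)
  then obtain n where n: "a n = (LEAST x. x \<in> range a)" by (elim rangeE) simp
  have "\<forall>m\<ge>n. a m = a n"
  proof (intro allI impI)
    fix m assume "n \<le> m"
    then have "a m \<le> a n" using assms by (simp add: decseq_def)
    moreover have "a n \<le> a m" unfolding n by (rule Least_le) simp
    ultimately show "a m = a n" by simp
  qed
  then show ?thesis by blast
qed

lemma nat_mono_sub:
  fixes a :: "nat \<Rightarrow> nat"
  shows "\<exists>r::nat\<Rightarrow>nat. strict_mono r \<and> mono (\<lambda>n. a (r n))"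
proof -
  obtain f where f: "strict_mono f" "monoseq (\<lambda>n. a (f n))" using seq_monosub by blast
  show ?thesis
  proof (cases "incseq (\<lambda>n. a (f n))")
    case True then have "mono (\<lambda>n. a (f n))" by (simp add: incseq_def mono_def)
    then show ?thesis using f by blast
  next
    case False
    then have "decseq (\<lambda>n. a (f n))" using f(2) False by (simp add: monoseq_iff)
    then obtain n where n: "\<forall>m\<ge>n. a (f m) = a (f n)" using dec_eventually_const by blast
    have "strict_mono (\<lambda>m. f (m + n))" using f(1) unfolding strict_mono_def by simp
    moreover have "mono (\<lambda>m. a (f (m + n)))"
    proof (rule monoI)
      fix x y :: nat assume "x \<le> y"
      have "a (f (x + n)) = a (f n)" using n le_add2 by blast
      moreover have "a (f (y + n)) = a (f n)" using n le_add2 by blast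
      ultimately show "a (f (x + n)) \<le> a (f (y + n))" by simp
    qed
    ultimately show ?thesis by blast
  qed
qed

lemma dickson_sub:
  fixes s :: "nat \<Rightarrow> 'b \<Rightarrow> nat"
  assumes "finite K"
  shows "\<exists>r::nat\<Rightarrow>nat. strict_mono r \<and> (\<forall>x\<in>K. mono (\<lambda>n. s (r n) x))"
  using assms
proof (induction K rule: finite_induct)
  case empty
  have "strict_mono (id::nat\<Rightarrow>nat)" by (simp add: strict_mono_def)
  then show ?case by blast
next
  case (insert x K)
  then obtain r :: "nat \<Rightarrow> nat" where r: "strict_mono r" "\<forall>y\<in>K. mono (\<lambda>n. s (r n) y)" by blast
  obtain r' :: "nat \<Rightarrow> nat" where r': "strict_mono r'" "mono (\<lambda>n. s (r (r' n)) x)"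
    using nat_mono_sub[of "\<lambda>n. s (r n) x"] by blast
  have "strict_mono (r \<circ> r')" using r(1) r'(1) by (simp add: strict_mono_def)
  moreover have "\<forall>y\<in>insert x K. mono (\<lambda>n. s ((r \<circ> r') n) y)"
  proof
    fix y assume "y \<in> insert x K"
    then show "mono (\<lambda>n. s ((r \<circ> r') n) y)"
    proof
      assume "y = x" then show ?thesis using r' by simp
    next
      assume "y \<in> K"
      then have m: "mono (\<lambda>n. s (r n) y)" using r by blast
      have "mono r'" using r'(1) strict_mono_mono by blast
      then show ?thesis using m by (auto simp: mono_def)
    qed
  qed
  ultimately show ?case by blast
qed

lemma dickson:
  fixes s :: "nat \<Rightarrow> 'b \<Rightarrow> nat"
  assumes "finite K"
  shows "\<exists>i j. i < j \<and> (\<forall>x\<in>K. s i x \<le> s j x)"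
proof -
  obtain r :: "nat \<Rightarrow> nat" where r: "strict_mono r" "\<forall>x\<in>K. mono (\<lambda>n. s (r n) x)" using dickson_sub[OF assms] by blast
  have "r 0 < r (1::nat)" using r(1) by (simp add: strict_mono_def)
  moreover have "\<forall>x\<in>K. s (r 0) x \<le> s (r 1) x" using r(2) by (auto simp: mono_def)
  ultimately show ?thesis by blast
qed

lemma surj_exists:
  assumes "finite X" "finite Y" "card Y \<le> card X" "Y = {} \<longrightarrow> X = {}"
  shows "\<exists>h. h ` X = Y"
proof (cases "Y = {}")
  case True then show ?thesis using assms by auto
next
  case False
  then obtain y0 where y0: "y0 \<in> Y" by blast
  obtain f where f: "f ` Y \<subseteq> X" "inj_on f Y" using card_le_inj[OF assms(2,1,3)] by blast
  define h where "h x = (if x \<in> f ` Y then inv_into Y f x else y0)" for x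
  have "h ` X = Y"
  proof
    show "h ` X \<subseteq> Y" using y0 by (auto simp: h_def inv_into_into)
    show "Y \<subseteq> h ` X"
    proof
      fix y assume "y \<in> Y"
      then have "h (f y) = y" using f by (simp add: h_def)
      then show "y \<in> h ` X" using f(1) \<open>y \<in> Y\<close> by (intro image_eqI[of _ _ "f y"]) auto
    qed
  qed
  then show ?thesis by blast
qed

lemma decomp:
  assumes fg: "finite_graph G" and bd: "\<forall>M. disjoint_edge_set G M \<longrightarrow> card M \<le> N"
  shows "\<exists>S k e. k \<le> 2*N \<and> bij_betw e {0..<k} S \<and> S \<subseteq> verts G \<and>
           (\<forall>x y. (x,y) \<in> edges G \<longrightarrow> x \<noteq> y \<longrightarrow> x \<in> S \<or> y \<in> S)"
proof -
  have fin: "finite (verts G)" and sub: "edges G \<subseteq> verts G \<times> verts G"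
    using fg by (auto simp: finite_graph_def is_graph_def)
  have finE: "finite (edges G)" using fin sub finite_subset by blast
  have d0: "disjoint_edge_set G {}" by (simp add: disjoint_edge_set_def)
  obtain M where M: "disjoint_edge_set G M" and Mmax: "\<forall>M'. disjoint_edge_set G M' \<longrightarrow> card M' \<le> card M"
    using ex_has_greatest_nat[of "disjoint_edge_set G" "{}" card "Suc N"] d0 bd by fastforce
  have finM: "finite M" using M(1) finE finite_subset by (auto simp: disjoint_edge_set_def)
  define S where "S = fst ` M \<union> snd ` M"
  have finS: "finite S" using finM by (simp add: S_def)
  have "card S \<le> card (fst ` M) + card (snd ` M)" unfolding S_def by (rule card_Un_le)
  also have "\<dots> \<le> card M + card M" using card_image_le[OF finM, of fst] card_image_le[OF finM, of snd] by linarith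
  also have "\<dots> \<le> 2 * N" using bd M(1) by (metis add_mono mult_2)
  finally have cS: "card S \<le> 2*N" .
  have SV: "S \<subseteq> verts G" using M(1) sub by (auto simp: S_def disjoint_edge_set_def)
  have cover: "\<forall>x y. (x,y) \<in> edges G \<longrightarrow> x \<noteq> y \<longrightarrow> x \<in> S \<or> y \<in> S"
  proof (intro allI impI, rule ccontr)
    fix x y assume e: "(x,y) \<in> edges G" "x \<noteq> y" "\<not> (x \<in> S \<or> y \<in> S)"
    have nin: "(x,y) \<notin> M" using e(3) by (force simp: S_def)
    have "disjoint_edge_set G (insert (x,y) M)"
      using M(1) e unfolding disjoint_edge_set_def S_def by (auto simp: image_iff)
    then have "card (insert (x,y) M) \<le> card M" using Mmax by blast
    then show False using nin finM by simp
  qed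
  obtain e where "bij_betw e {0..<card S} S" using ex_bij_betw_nat_finite[OF finS] by blast
  then show ?thesis using cS SV cover by blast
qed
definition ty :: "'a graph \<Rightarrow> (nat \<Rightarrow> 'a) \<Rightarrow> nat \<Rightarrow> 'a \<Rightarrow> nat set \<times> bool" where
  "ty G e k v = ({i. i < k \<and> (v, e i) \<in> edges G}, (v, v) \<in> edges G)"

definition cls :: "'a graph \<Rightarrow> 'a set \<Rightarrow> (nat \<Rightarrow> 'a) \<Rightarrow> nat \<Rightarrow> nat set \<times> bool \<Rightarrow> 'a set" where
  "cls G S e k T = {v \<in> verts G - S. ty G e k v = T}"

lemma tyE: "i < k \<Longrightarrow> (x, eG i) \<in> edges G \<longleftrightarrow> i \<in> fst (ty G eG k x)"
  by (simp add: ty_def)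

lemma tyL: "(x, x) \<in> edges G \<longleftrightarrow> snd (ty G eG k x)"
  by (simp add: ty_def)

lemma main_hom:
  fixes A B :: "'a graph"
  assumes gA: "is_graph A" and gB: "is_graph B" and fA: "finite (verts A)" and fB: "finite (verts B)"
    and eA: "bij_betw eA {0..<k} SA" and eB: "bij_betw eB {0..<k} SB"
    and SA: "SA \<subseteq> verts A" and SB: "SB \<subseteq> verts B"
    and cA: "\<forall>x y. (x,y) \<in> edges A \<longrightarrow> x \<noteq> y \<longrightarrow> x \<in> SA \<or> y \<in> SA"
    and cB: "\<forall>x y. (x,y) \<in> edges B \<longrightarrow> x \<noteq> y \<longrightarrow> x \<in> SB \<or> y \<in> SB"
    and R: "\<forall>a b. a < k \<longrightarrow> b < k \<longrightarrow> ((eA a, eA b) \<in> edges A \<longleftrightarrow> (eB a, eB b) \<in> edges B)"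
    and cnt: "\<forall>T. card (cls A SA eA k T) \<le> card (cls B SB eB k T) \<and>
                   (cls A SA eA k T = {} \<longrightarrow> cls B SB eB k T = {})"
  shows "strong_hom_image_le A B"
proof -
  have subA: "edges A \<subseteq> verts A \<times> verts A" and symA: "sym (edges A)" using gA by (auto simp: is_graph_def)
  have subB: "edges B \<subseteq> verts B \<times> verts B" and symB: "sym (edges B)" using gB by (auto simp: is_graph_def)
  have "\<forall>T. \<exists>h. h ` cls B SB eB k T = cls A SA eA k T"
  proof
    fix T
    show "\<exists>h. h ` cls B SB eB k T = cls A SA eA k T"
    proof (rule surj_exists)
      show "finite (cls B SB eB k T)" "finite (cls A SA eA k T)" using fA fB by (auto simp: cls_def)
      show "card (cls A SA eA k T) \<le> card (cls B SB eB k T)"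
        "cls A SA eA k T = {} \<longrightarrow> cls B SB eB k T = {}" using cnt by blast+
    qed
  qed
  then obtain H where H: "\<And>T. H T ` cls B SB eB k T = cls A SA eA k T" by metis
  define f where "f v = (if v \<in> SB then eA (the_inv_into {0..<k} eB v) else H (ty B eB k v) v)" for v
  have injB: "inj_on eB {0..<k}" and imB: "eB ` {0..<k} = SB" using eB by (auto simp: bij_betw_def)
  have injA: "inj_on eA {0..<k}" and imA: "eA ` {0..<k} = SA" using eA by (auto simp: bij_betw_def)
  have fS: "f (eB a) = eA a" if "a < k" for a
    using that imB injB by (auto simp: f_def the_inv_into_f_f)
  have fN: "f v \<in> verts A - SA \<and> ty A eA k (f v) = ty B eB k v" if "v \<in> verts B" "v \<notin> SB" for v
  proof -
    have "v \<in> cls B SB eB k (ty B eB k v)" using that by (simp add: cls_def)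
    then have "H (ty B eB k v) v \<in> cls A SA eA k (ty B eB k v)" using H by blast
    then show ?thesis using that by (simp add: f_def cls_def)
  qed
  have pre: "\<exists>x\<in>verts B. f x = u \<and> (x \<notin> SB \<longrightarrow> u \<notin> SA \<and> ty B eB k x = ty A eA k u) \<and>
                 (x \<in> SB \<longrightarrow> (\<exists>a<k. x = eB a \<and> u = eA a))" if "u \<in> verts A" for u
  proof (cases "u \<in> SA")
    case True
    then obtain a where a: "a < k" "u = eA a" using imA by auto
    then have "eB a \<in> SB" using imB by auto
    then show ?thesis using a fS SB by (intro bexI[of _ "eB a"]) auto
  next
    case False
    then have "u \<in> cls A SA eA k (ty A eA k u)" using that by (simp add: cls_def)
    then obtain x where x: "x \<in> cls B SB eB k (ty A eA k u)" "H (ty A eA k u) x = u"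
      using H by (metis imageE)
    then have xv: "x \<in> verts B" "x \<notin> SB" "ty B eB k x = ty A eA k u" by (auto simp: cls_def)
    then have "f x = u" using x by (simp add: f_def)
    then show ?thesis using xv False by blast
  qed
  have hom: "graph_hom f B A"
    unfolding graph_hom_def
  proof (intro conjI)
    show "f ` verts B \<subseteq> verts A"
    proof
      fix u assume "u \<in> f ` verts B"
      then obtain v where v: "v \<in> verts B" "u = f v" by blast
      show "u \<in> verts A"
      proof (cases "v \<in> SB")
        case True
        then obtain a where "a < k" "v = eB a" using imB by auto
        then show ?thesis using v fS imA SA by auto
      next
        case False then show ?thesis using fN v by auto
      qed
    qed
    have edge: "(f x, f y) \<in> edges A" if xy: "(x,y) \<in> edges B" "x \<in> SB \<or> y \<notin> SB" for x y
    proof -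
      have xyv: "x \<in> verts B" "y \<in> verts B" using xy subB by auto
      show ?thesis
      proof (cases "x \<in> SB")
        case True
        then obtain a where a: "a < k" "x = eB a" using imB by auto
        show ?thesis
        proof (cases "y \<in> SB")
          case True
          then obtain b where b: "b < k" "y = eB b" using imB by auto
          then show ?thesis using a R xy fS by auto
        next
          case False
          have "(y, x) \<in> edges B" using xy symB by (auto dest: symD)
          then have "a \<in> fst (ty B eB k y)" using tyE[where k=k and i=a and G=B and eG=eB and x=y] a by simp
          then have "(f y, eA a) \<in> edges A" using tyE[where k=k and i=a and G=A and eG=eA and x="f y"] a fN[OF xyv(2) False] by simp
          then show ?thesis using a fS symA by (auto dest: symD)
        qed
      next
        case False
        then have yN: "y \<notin> SB" using xy by blast
        then have "x = y" using cB xy False by blast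
        then have "snd (ty B eB k x)" using xy tyL[where k=k] by metis
        then have "snd (ty A eA k (f x))" using fN[OF xyv(1) False] by simp
        then show ?thesis using \<open>x = y\<close> tyL[where k=k] by metis
      qed
    qed
    show "\<forall>(x, y)\<in>edges B. (f x, f y) \<in> edges A"
    proof (intro ballI, clarify)
      fix x y assume xy: "(x, y) \<in> edges B"
      show "(f x, f y) \<in> edges A"
      proof (cases "x \<in> SB \<or> y \<notin> SB")
        case True then show ?thesis using edge xy by blast
      next
        case False
        have "(y, x) \<in> edges B" using xy symB by (auto dest: symD)
        then have "(f y, f x) \<in> edges A" using edge False by blast
        then show ?thesis using symA by (auto dest: symD)
      qed
    qed
  qed
  have surj: "f ` verts B = verts A"
  proof
    show "f ` verts B \<subseteq> verts A" using hom by (simp add: graph_hom_def)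
    show "verts A \<subseteq> f ` verts B" using pre by blast
  qed
  have strong: "\<exists>x y. (x, y) \<in> edges B \<and> f x = u \<and> f y = w" if uw: "(u, w) \<in> edges A" for u w
  proof -
    have uv: "u \<in> verts A" "w \<in> verts A" using uw subA by auto
    obtain x where x: "x\<in>verts B" "f x = u" "x \<notin> SB \<longrightarrow> u \<notin> SA \<and> ty B eB k x = ty A eA k u"
        "x \<in> SB \<longrightarrow> (\<exists>a<k. x = eB a \<and> u = eA a)" using pre[OF uv(1)] by blast
    obtain y where y: "y\<in>verts B" "f y = w" "y \<notin> SB \<longrightarrow> w \<notin> SA \<and> ty B eB k y = ty A eA k w"
        "y \<in> SB \<longrightarrow> (\<exists>a<k. y = eB a \<and> w = eA a)" using pre[OF uv(2)] by blast
    show ?thesis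
    proof (cases "x \<in> SB")
      case xS: True
      then obtain a where a: "a < k" "x = eB a" "u = eA a" using x by blast
      show ?thesis
      proof (cases "y \<in> SB")
        case True
        then obtain b where b: "b < k" "y = eB b" "w = eA b" using y by blast
        then have "(x, y) \<in> edges B" using a R uw by auto
        then show ?thesis using x y by blast
      next
        case False
        have "(w, u) \<in> edges A" using uw symA by (auto dest: symD)
        then have "a \<in> fst (ty A eA k w)" using tyE[where k=k and i=a and G=A and eG=eA and x=w] a by simp
        then have "(y, eB a) \<in> edges B" using tyE[where k=k and i=a and G=B and eG=eB and x=y] a y False by simp
        then have "(x, y) \<in> edges B" using a symB by (auto dest: symD)
        then show ?thesis using x y by blast
      qed
    next
      case xN: False
      show ?thesis
      proof (cases "y \<in> SB")
        case True
        then obtain b where b: "b < k" "y = eB b" "w = eA b" using y by blast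
        then have "b \<in> fst (ty A eA k u)" using tyE[where k=k and i=b and G=A and eG=eA and x=u] uw by simp
        then have "(x, eB b) \<in> edges B" using tyE[where k=k and i=b and G=B and eG=eB and x=x] b x xN by simp
        then have "(x, y) \<in> edges B" using b by simp
        then show ?thesis using x y by blast
      next
        case False
        then have "u \<notin> SA" "w \<notin> SA" using x y xN by auto
        then have "u = w" using cA uw by blast
        then have "snd (ty A eA k u)" using uw tyL[where k=k] by metis
        then have "(x, x) \<in> edges B" using x xN tyL[where k=k] by metis
        then show ?thesis using x \<open>u = w\<close> by blast
      qed
    qed
  qed
  have "strong_graph_hom f B A" unfolding strong_graph_hom_def using hom strong by blast
  then show ?thesis unfolding strong_hom_image_le_def using surj by blast
qed
lemma pair_inj:
  assumes inj: "inj_on f V" and sub: "E \<subseteq> V \<times> V"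
  shows "inj_on (\<lambda>p. (f (fst p), f (snd p))) E"
proof (rule inj_onI)
  fix p q assume p: "p \<in> E" and q: "q \<in> E" and eq: "(f (fst p), f (snd p)) = (f (fst q), f (snd q))"
  have "fst p \<in> V" "snd p \<in> V" "fst q \<in> V" "snd q \<in> V" using p q sub by auto
  then have "fst p = fst q" "snd p = snd q" using eq inj by (auto dest: inj_onD)
  then show "p = q" by (simp add: prod_eq_iff)
qed

lemma strong_imp_hom: "strong_hom_image_le A B \<Longrightarrow> hom_image_le A B"
  by (auto simp: strong_hom_image_le_def hom_image_le_def strong_graph_hom_def)

lemma iso_lemma:
  fixes A B :: "'a graph"
  assumes gA: "finite_graph A" and gB: "finite_graph B"
    and hom: "graph_hom f B A" and im: "f ` verts B = verts A" and inj: "inj_on f (verts B)"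
    and ce: "card (edges A) \<le> card (edges B)"
  shows "strong_hom_image_le B A"
proof -
  have subA: "edges A \<subseteq> verts A \<times> verts A" and fA: "finite (verts A)"
    using gA by (auto simp: finite_graph_def is_graph_def)
  have subB: "edges B \<subseteq> verts B \<times> verts B" and fB: "finite (verts B)"
    using gB by (auto simp: finite_graph_def is_graph_def)
  have finEA: "finite (edges A)" using subA fA finite_subset by blast
  define \<phi> where "\<phi> p = (f (fst p), f (snd p))" for p
  have injphi: "inj_on \<phi> (edges B)"
    using pair_inj[OF inj subB] unfolding \<phi>_def .
  have phisub: "\<phi> ` edges B \<subseteq> edges A" using hom by (auto simp: graph_hom_def \<phi>_def)
  have "card (\<phi> ` edges B) = card (edges B)" using card_image[OF injphi] .
  then have phieq: "\<phi> ` edges B = edges A"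
    using card_subset_eq[OF finEA phisub] ce card_mono[OF finEA phisub] by simp
  define g where "g = the_inv_into (verts B) f"
  have gf: "g (f x) = x" if "x \<in> verts B" for x
    using inj that by (simp add: g_def the_inv_into_f_f)
  have fg: "f (g u) = u" "g u \<in> verts B" if "u \<in> verts A" for u
  proof -
    have u: "u \<in> f ` verts B" using that im by simp
    show "f (g u) = u" unfolding g_def by (rule f_the_inv_into_f[OF inj u])
    show "g u \<in> verts B" unfolding g_def by (rule the_inv_into_into[OF inj u subset_refl])
  qed
  have Eg: "(g u, g w) \<in> edges B" if "(u, w) \<in> edges A" for u w
  proof -
    have "(u, w) \<in> \<phi> ` edges B" using phieq that by simp
    then obtain p where p: "p \<in> edges B" "\<phi> p = (u, w)" by (elim imageE) simp
    then have "fst p \<in> verts B" "snd p \<in> verts B" using subB by auto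
    then have "g u = fst p" "g w = snd p" using p gf by (auto simp: \<phi>_def)
    then show ?thesis using p(1) by simp
  qed
  have homg: "graph_hom g A B" unfolding graph_hom_def
  proof (intro conjI)
    show "g ` verts A \<subseteq> verts B" using fg(2) by blast
    show "\<forall>(x, y)\<in>edges A. (g x, g y) \<in> edges B" using Eg by blast
  qed
  have img: "g ` verts A = verts B"
  proof
    show "g ` verts A \<subseteq> verts B" using fg by auto
    show "verts B \<subseteq> g ` verts A"
    proof
      fix x assume "x \<in> verts B"
      then have "x = g (f x)" "f x \<in> verts A" using gf im by auto
      then show "x \<in> g ` verts A" by blast
    qed
  qed
  have "strong_graph_hom g A B"
    unfolding strong_graph_hom_def
  proof (intro conjI homg ballI, clarify)
    fix x y assume xy: "(x, y) \<in> edges B"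
    then have v: "x \<in> verts B" "y \<in> verts B" using subB by auto
    have "(f x, f y) \<in> edges A" using hom xy by (auto simp: graph_hom_def)
    then show "\<exists>a b. (a, b) \<in> edges A \<and> g a = x \<and> g b = y" using gf v by blast
  qed
  then show ?thesis unfolding strong_hom_image_le_def using img by blast
qed

lemma no_desc:
  fixes g :: "nat \<Rightarrow> 'a graph"
  assumes fg: "\<forall>i. finite_graph (g i)" and le: "\<forall>i. hom_image_le (g (Suc i)) (g i)"
  shows "\<exists>i. strong_hom_image_le (g i) (g (Suc i))"
proof (rule ccontr)
  assume neg: "\<not> ?thesis"
  define v where "v i = card (verts (g i))" for i
  define e where "e i = card (edges (g i))" for i
  have finV: "finite (verts (g i))" for i using fg by (simp add: finite_graph_def)
  have subE: "edges (g i) \<subseteq> verts (g i) \<times> verts (g i)" for i using fg by (simp add: finite_graph_def is_graph_def)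
  obtain F where F: "\<And>i. graph_hom (F i) (g i) (g (Suc i)) \<and> F i ` verts (g i) = verts (g (Suc i))"
    using le unfolding hom_image_le_def by metis
  have vdec: "v (Suc i) \<le> v i" for i
    using F[of i] card_image_le[OF finV[of i], of "F i"] by (simp add: v_def)
  have v0: "v i \<le> v 0" for i
    by (induction i) (simp, metis vdec le_trans)
  define K where "K = v 0 * v 0"
  have eK: "e i \<le> K" for i
  proof -
    have "e i \<le> card (verts (g i) \<times> verts (g i))"
      unfolding e_def using subE finV by (intro card_mono) auto
    also have "\<dots> = v i * v i" by (simp add: v_def card_cartesian_product)
    also have "\<dots> \<le> K" unfolding K_def using v0[of i] by (simp add: mult_le_mono)
    finally show ?thesis .
  qed
  define \<mu> where "\<mu> i = v i * (K + 1) + (K - e i)" for i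
  have step: "\<mu> (Suc i) < \<mu> i" for i
  proof (cases "v (Suc i) < v i")
    case True
    then have le1: "(v (Suc i) + 1) * (K + 1) \<le> v i * (K + 1)" by (intro mult_right_mono) auto
    have "\<mu> (Suc i) \<le> v (Suc i) * (K + 1) + K" unfolding \<mu>_def by simp
    also have "\<dots> < (v (Suc i) + 1) * (K + 1)" by simp
    also have "\<dots> \<le> v i * (K + 1)" using le1 .
    also have "\<dots> \<le> \<mu> i" unfolding \<mu>_def by simp
    finally show ?thesis .
  next
    case False
    then have veq: "v (Suc i) = v i" using vdec[of i] by simp
    then have "card (F i ` verts (g i)) = card (verts (g i))" using F[of i] by (simp add: v_def)
    then have inj: "inj_on (F i) (verts (g i))" using eq_card_imp_inj_on finV by blast
    define \<phi> where "\<phi> p = (F i (fst p), F i (snd p))" for p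
    have injphi: "inj_on \<phi> (edges (g i))"
      using pair_inj[OF inj subE[of i]] unfolding \<phi>_def .
    have phisub: "\<phi> ` edges (g i) \<subseteq> edges (g (Suc i))" using F[of i] by (auto simp: graph_hom_def \<phi>_def)
    have finE: "finite (edges (g (Suc i)))" using subE finV finite_subset by (meson finite_SigmaI)
    have "e i \<le> e (Suc i)" unfolding e_def using card_inj_on_le[OF injphi phisub finE] .
    moreover have "\<not> e (Suc i) \<le> e i"
    proof
      assume "e (Suc i) \<le> e i"
      then have "strong_hom_image_le (g i) (g (Suc i))"
        using iso_lemma[of "g (Suc i)" "g i" "F i"] F[of i] fg inj by (simp add: e_def)
      then show False using neg by blast
    qed
    ultimately have "e i < e (Suc i)" by simp
    then have "K - e (Suc i) < K - e i" using eK[of "Suc i"] by arith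
    then show ?thesis unfolding \<mu>_def using veq by simp
  qed
  have "\<mu> i + i \<le> \<mu> 0" for i
  proof (induction i)
    case (Suc i) then show ?case using step[of i] by simp
  qed simp
  from this[of "Suc (\<mu> 0)"] show False by simp
qed
lemma no_antichain:
  fixes C :: "'a graph set" and g :: "nat \<Rightarrow> 'a graph"
  assumes fC: "\<forall>G \<in> C. finite_graph G"
    and bd: "\<forall>G \<in> C. \<forall>M. disjoint_edge_set G M \<longrightarrow> card M \<le> N"
    and gC: "\<forall>i. g i \<in> C"
  shows "\<exists>i j. i \<noteq> j \<and> strong_hom_image_le (g i) (g j)"
proof -
  define Q where "Q n t \<longleftrightarrow> fst (snd t) \<le> 2*N \<and> bij_betw (snd (snd t)) {0..<fst (snd t)} (fst t) \<and>
      fst t \<subseteq> verts (g n) \<and> (\<forall>x y. (x,y) \<in> edges (g n) \<longrightarrow> x \<noteq> y \<longrightarrow> x \<in> fst t \<or> y \<in> fst t)"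
    for n and t :: "'a set \<times> nat \<times> (nat \<Rightarrow> 'a)"
  have "\<exists>t. Q n t" for n
  proof -
    have "g n \<in> C" using gC by blast
    then obtain S k e where "k \<le> 2*N \<and> bij_betw e {0..<k} S \<and> S \<subseteq> verts (g n) \<and>
           (\<forall>x y. (x,y) \<in> edges (g n) \<longrightarrow> x \<noteq> y \<longrightarrow> x \<in> S \<or> y \<in> S)"
      using decomp[of "g n" N] fC bd by blast
    then have "Q n (S, k, e)" by (simp add: Q_def)
    then show ?thesis by blast
  qed
  then obtain F where F: "\<And>n. Q n (F n)" by metis
  define Sf where "Sf n = fst (F n)" for n
  define kf where "kf n = fst (snd (F n))" for n
  define ef where "ef n = snd (snd (F n))" for n
  have P: "kf n \<le> 2*N \<and> bij_betw (ef n) {0..<kf n} (Sf n) \<and> Sf n \<subseteq> verts (g n) \<and>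
           (\<forall>x y. (x,y) \<in> edges (g n) \<longrightarrow> x \<noteq> y \<longrightarrow> x \<in> Sf n \<or> y \<in> Sf n)" for n
    using F[of n] unfolding Q_def Sf_def kf_def ef_def by blast
  define key where "key n = (kf n, {(a,b). a < kf n \<and> b < kf n \<and> (ef n a, ef n b) \<in> edges (g n)})" for n
  have "range key \<subseteq> {0..2*N} \<times> Pow ({0..<2*N} \<times> {0..<2*N})"
    using P by (fastforce simp: key_def)
  then have "finite (range key)" by (rule finite_subset) auto
  then obtain n0 where n0: "infinite {n \<in> UNIV. key n = key n0}"
    using pigeonhole_infinite[of "UNIV :: nat set" key] by auto
  define J where "J = {n. key n = key n0}"
  have infJ: "infinite J" using n0 by (simp add: J_def)
  define r where "r = enumerate J"
  have rJ: "key (r m) = key n0" for m using enumerate_in_set[OF infJ] by (simp add: r_def J_def)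
  have rmono: "m1 < m2 \<Longrightarrow> r m1 < r m2" for m1 m2 using enumerate_mono[OF _ infJ] by (simp add: r_def)
  define c where "c n T = card (cls (g n) (Sf n) (ef n) (kf n) T)" for n T
  define s where "s m x = (if snd x then c (r m) (fst x) else (if c (r m) (fst x) = 0 then 1 else 0))"
    for m and x :: "(nat set \<times> bool) \<times> bool"
  define KK where "KK = (Pow {0..<2*N} \<times> (UNIV :: bool set)) \<times> (UNIV :: bool set)"
  have "finite KK" by (simp add: KK_def)
  then obtain m1 m2 where m: "m1 < m2" "\<forall>x\<in>KK. s m1 x \<le> s m2 x" using dickson[of KK s] by blast
  define i where "i = r m1"
  define j where "j = r m2"
  have ij: "i \<noteq> j" using rmono[OF m(1)] by (simp add: i_def j_def)
  have keq: "key i = key j" using rJ by (simp add: i_def j_def)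
  then have keqk: "kf j = kf i" by (simp add: key_def)
  define k where "k = kf i"
  have fgi: "finite_graph (g i)" and fgj: "finite_graph (g j)" using fC gC by auto
  have Pi: "kf i \<le> 2*N" "bij_betw (ef i) {0..<k} (Sf i)" "Sf i \<subseteq> verts (g i)"
    "\<forall>x y. (x,y) \<in> edges (g i) \<longrightarrow> x \<noteq> y \<longrightarrow> x \<in> Sf i \<or> y \<in> Sf i"
    using P[of i] by (auto simp: k_def)
  have Pj: "bij_betw (ef j) {0..<k} (Sf j)" "Sf j \<subseteq> verts (g j)"
    "\<forall>x y. (x,y) \<in> edges (g j) \<longrightarrow> x \<noteq> y \<longrightarrow> x \<in> Sf j \<or> y \<in> Sf j"
    using P[of j] keqk by (auto simp: k_def)
  have R: "\<forall>a b. a < k \<longrightarrow> b < k \<longrightarrow> ((ef i a, ef i b) \<in> edges (g i) \<longleftrightarrow> (ef j a, ef j b) \<in> edges (g j))"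
  proof (intro allI impI)
    fix a b assume ab: "a < k" "b < k"
    have "{(a,b). a < kf i \<and> b < kf i \<and> (ef i a, ef i b) \<in> edges (g i)} =
          {(a,b). a < kf j \<and> b < kf j \<and> (ef j a, ef j b) \<in> edges (g j)}"
      using keq unfolding key_def prod.inject by (rule conjunct2)
    then show "(ef i a, ef i b) \<in> edges (g i) \<longleftrightarrow> (ef j a, ef j b) \<in> edges (g j)"
      using ab keqk unfolding k_def by (metis (no_types, lifting) case_prodI mem_Collect_eq case_prodD)
  qed
  have clsE: "cls (g n) (Sf n) (ef n) (kf n) T = {}" if "T \<notin> Pow {0..<2*N} \<times> (UNIV :: bool set)" for n T
  proof -
    have "\<And>v. fst (ty (g n) (ef n) (kf n) v) \<subseteq> {0..<2*N}" using P[of n] by (auto simp: ty_def)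
    then show ?thesis using that unfolding cls_def by (auto simp: mem_Times_iff)
  qed
  have cnt: "\<forall>T. card (cls (g i) (Sf i) (ef i) k T) \<le> card (cls (g j) (Sf j) (ef j) k T) \<and>
                   (cls (g i) (Sf i) (ef i) k T = {} \<longrightarrow> cls (g j) (Sf j) (ef j) k T = {})"
  proof
    fix T
    show "card (cls (g i) (Sf i) (ef i) k T) \<le> card (cls (g j) (Sf j) (ef j) k T) \<and>
          (cls (g i) (Sf i) (ef i) k T = {} \<longrightarrow> cls (g j) (Sf j) (ef j) k T = {})"
    proof (cases "T \<in> Pow {0..<2*N} \<times> (UNIV :: bool set)")
      case True
      then have "(T, True) \<in> KK" "(T, False) \<in> KK" by (auto simp: KK_def)
      then have s1: "s m1 (T, True) \<le> s m2 (T, True)" and s2: "s m1 (T, False) \<le> s m2 (T, False)"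
        using m(2) by blast+
      have c1: "c i T \<le> c j T" using s1 by (simp add: s_def i_def j_def)
      have c2: "c i T = 0 \<Longrightarrow> c j T = 0" using s2 by (simp add: s_def i_def j_def split: if_splits)
      have fi: "finite (cls (g i) (Sf i) (ef i) k T)" and fj: "finite (cls (g j) (Sf j) (ef j) k T)"
        using fgi fgj by (auto simp: cls_def finite_graph_def)
      show ?thesis using c1 c2 fi fj keqk by (simp add: c_def k_def)
    next
      case False
      then show ?thesis using clsE[OF False, of i] clsE[OF False, of j] keqk by (simp add: k_def)
    qed
  qed
  have "strong_hom_image_le (g i) (g j)"
    by (rule main_hom[OF _ _ _ _ Pi(2) Pj(1) Pi(3) Pj(2) Pi(4) Pj(3) R cnt])
       (use fgi fgj in \<open>auto simp: finite_graph_def\<close>)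
  then show ?thesis using ij by blast
qed

theorem corollary2p9:
  fixes C :: "'a graph set" and N :: nat
  assumes "\<forall>G \<in> C. finite_graph G"
    and "\<forall>G \<in> C. \<forall>M. disjoint_edge_set G M \<longrightarrow> card M \<le> N"
  shows "wqo_on_class hom_image_le C \<and> wqo_on_class strong_hom_image_le C"
proof -
  show ?thesis unfolding wqo_on_class_def
  proof (intro conjI notI)
    assume "\<exists>g::nat \<Rightarrow> 'a graph. (\<forall>i. g i \<in> C) \<and> (\<forall>i. hom_image_le (g (Suc i)) (g i) \<and> \<not> hom_image_le (g i) (g (Suc i)))"
    then obtain g :: "nat \<Rightarrow> 'a graph" where g: "\<forall>i. g i \<in> C" "\<forall>i. hom_image_le (g (Suc i)) (g i)" "\<forall>i. \<not> hom_image_le (g i) (g (Suc i))"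
      by blast
    have "\<forall>i. finite_graph (g i)" using g(1) assms(1) by blast
    then obtain i where "strong_hom_image_le (g i) (g (Suc i))" using no_desc[of g] g(2) by blast
    then show False using g(3) strong_imp_hom by blast
  next
    assume "\<exists>g::nat \<Rightarrow> 'a graph. (\<forall>i. g i \<in> C) \<and> (\<forall>i j. i \<noteq> j \<longrightarrow> \<not> hom_image_le (g i) (g j))"
    then obtain g :: "nat \<Rightarrow> 'a graph" where g: "\<forall>i. g i \<in> C" "\<forall>i j. i \<noteq> j \<longrightarrow> \<not> hom_image_le (g i) (g j)" by blast
    obtain i j where "i \<noteq> j" "strong_hom_image_le (g i) (g j)" using no_antichain[OF assms g(1)] by blast
    then show False using g(2) strong_imp_hom by blast
  next
    assume "\<exists>g::nat \<Rightarrow> 'a graph. (\<forall>i. g i \<in> C) \<and> (\<forall>i. strong_hom_image_le (g (Suc i)) (g i) \<and> \<not> strong_hom_image_le (g i) (g (Suc i)))"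
    then obtain g :: "nat \<Rightarrow> 'a graph" where g: "\<forall>i. g i \<in> C" "\<forall>i. strong_hom_image_le (g (Suc i)) (g i)" "\<forall>i. \<not> strong_hom_image_le (g i) (g (Suc i))"
      by blast
    have "\<forall>i. finite_graph (g i)" using g(1) assms(1) by blast
    moreover have "\<forall>i. hom_image_le (g (Suc i)) (g i)" using g(2) strong_imp_hom by blast
    ultimately obtain i where "strong_hom_image_le (g i) (g (Suc i))" using no_desc[of g] by blast
    then show False using g(3) by blast
  next
    assume "\<exists>g::nat \<Rightarrow> 'a graph. (\<forall>i. g i \<in> C) \<and> (\<forall>i j. i \<noteq> j \<longrightarrow> \<not> strong_hom_image_le (g i) (g j))"
    then obtain g :: "nat \<Rightarrow> 'a graph" where g: "\<forall>i. g i \<in> C" "\<forall>i j. i \<noteq> j \<longrightarrow> \<not> strong_hom_image_le (g i) (g j)" by blast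
    obtain i j where "i \<noteq> j" "strong_hom_image_le (g i) (g j)" using no_antichain[OF assms g(1)] by blast
    then show False using g(2) by blast
  qed
qed
end
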